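(* For all terms $M,N$: if $M\sim_{\alpha s} N$ then $M\sim_\alpha N$.
   Context: Let $\mathcal V$ (the variables) be a type with decidable equality, equipped with functions $\mathrm{encode}:\mathcal V\to\mathbb N$ and $\mathrm{decode}:\mathbb N\to\mathcal V$ such that $\mathrm{encode}(\mathrm{decode}\,n)=n$ for all $n$. Let $\mathcal C$ (the constants) be any type. Terms $\Lambda$ are generated by: $c\,k$ ($k\in\mathcal C$), $v\,x$ ($x\in\mathcal V$), $\lambda[x:A]M$, $\Pi[x:A]B$ and $M\cdot N$; in $\lambda[x:A]M$ and $\Pi[x:A]B$ the name $x$ binds in $M$ (resp. $B$) but not in $A$. Terms are raw first-order syntax (not identified up to renaming of bound variables) and $\equiv$ denotes syntactic identity. The list of free variables is $\mathrm{fv}(c\,k)=[\,]$, $\mathrm{fv}(v\,x)=[x]$, $\mathrm{fv}(\lambda[x:A]M)=\mathrm{fv}\,A\mathbin{+\!\!+}(\mathrm{fv}\,M-x)$, $\mathrm{fv}(\Pi[x:A]B)=\mathrm{fv}\,A\mathbin{+\!\!+}(\mathrm{fv}\,B-x)$, $\mathrm{fv}(M\cdot N)=\mathrm{fv}\,M\mathbin{+\!\!+}\mathrm{fv}\,N$, where $\mathbin{+\!\!+}$ is list concatenation and $xs-x$ deletes every occurrence of $x$ from $xs$. Fix a function $\chi':\mathrm{List}\,\mathbb N\to\mathbb N$ with $\chi'(ns)\notin ns$ for every list $ns$, and put $X'(xs)=\mathrm{decode}(\chi'(\mathrm{map}\ \mathrm{encode}\ xs))$. A substitution is any function $\sigma:\mathcal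 V\to\Lambda$; $\iota=v$ is the identity substitution; $(\sigma,x:=N)(y)=N$ if $y=x$ and $\sigma\,y$ otherwise. For a substitution $\sigma$ and a list $xs$ of variables, $X(\sigma,xs)=X'(\text{concatenation of the lists }\mathrm{fv}(\sigma\,y)\text{ for }y\in xs)$. The action $M\bullet\sigma$ is defined by structural recursion: $c\,k\bullet\sigma=c\,k$; $v\,x\bullet\sigma=\sigma\,x$; $(M\cdot N)\bullet\sigma=(M\bullet\sigma)\cdot(N\bullet\sigma)$; $(\lambda[x:A]M)\bullet\sigma=\lambda[y:A\bullet\sigma](M\bullet(\sigma,x:=v\,y))$ with $y=X(\sigma,\mathrm{fv}\,M-x)$; $(\Pi[x:A]B)\bullet\sigma=\Pi[y:A\bullet\sigma](B\bullet(\sigma,x:=v\,y))$ with $y=X(\sigma,\mathrm{fv}\,B-x)$. Unary substitution is $M[x:=N]=M\bullet(\iota,x:=N)$. $\alpha$-conversion $\sim_\alpha$ is the inductively defined relation with rules: $c\,k\sim_\alpha c\,k$; $v\,x\sim_\alpha v\,x$; $M\cdot N\sim_\alpha M'\cdot N'$ if $M\sim_\alpha M'$ and $N\sim_\alpha N'$; $\lambda[x:A]M\sim_\alpha\lambda[x':A']M'$ if $A\sim_\alpha A'$ and there is a variable $y$ with $y\notin\mathrm{fv}\,M-x$, $y\notin\mathrm{fv}\,M'-x'$ and $M[x:=v\,y]\equiv M'[x':=v\,y]$; and the same rule with $\Pi$ in place of $\lambda$. The relation $\sim_{\alpha s}$ is defined inductively by the same rules as $\sim_\alpha$ (with $\sim_{\alpha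 s}$ in place of $\sim_\alpha$ in the premises), except that in the rules for $\lambda$ and $\Pi$ the premise $M[x:=v\,y]\equiv M'[x':=v\,y]$ is replaced by $M[x:=v\,y]\sim_{\alpha s}M'[x':=v\,y]$ (the side conditions $y\notin\mathrm{fv}\,M-x$, $y\notin\mathrm{fv}\,M'-x'$ and $A\sim_{\alpha s}A'$ are kept). *)

theory Defs
  imports Main
begin

text \<open>Raw terms over constants 'c and variables 'v.
  Lam x A M and Pi x A B: x binds in the body, not in the type annotation A.\<close>
datatype ('c, 'v) trm =
    Con 'c
  | Var 'v
  | Lam 'v "('c, 'v) trm" "('c, 'v) trm"
  | Pi 'v "('c, 'v) trm" "('c, 'v) trm"
  | App "('c, 'v) trm" "('c, 'v) trm"

fun fv :: "('c, 'v) trm \<Rightarrow> 'v list" where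
  "fv (Con k) = []"
| "fv (Var x) = [x]"
| "fv (Lam x A M) = fv A @ removeAll x (fv M)"
| "fv (Pi x A B) = fv A @ removeAll x (fv B)"
| "fv (App M N) = fv M @ fv N"

definition Xp :: "('v \<Rightarrow> nat) \<Rightarrow> (nat \<Rightarrow> 'v) \<Rightarrow> (nat list \<Rightarrow> nat) \<Rightarrow> 'v list \<Rightarrow> 'v" where
  "Xp enc dec chi xs = dec (chi (map enc xs))"

definition Xs :: "('v \<Rightarrow> nat) \<Rightarrow> (nat \<Rightarrow> 'v) \<Rightarrow> (nat list \<Rightarrow> nat)
    \<Rightarrow> ('v \<Rightarrow> ('c, 'v) trm) \<Rightarrow> 'v list \<Rightarrow> 'v" where
  "Xs enc dec chi \<sigma> xs = Xp enc dec chi (concat (map (\<lambda>y. fv (\<sigma> y)) xs))"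

fun sbs :: "('v \<Rightarrow> nat) \<Rightarrow> (nat \<Rightarrow> 'v) \<Rightarrow> (nat list \<Rightarrow> nat)
    \<Rightarrow> ('c, 'v) trm \<Rightarrow> ('v \<Rightarrow> ('c, 'v) trm) \<Rightarrow> ('c, 'v) trm" where
  "sbs enc dec chi (Con k) \<sigma> = Con k"
| "sbs enc dec chi (Var x) \<sigma> = \<sigma> x"
| "sbs enc dec chi (App M N) \<sigma> = App (sbs enc dec chi M \<sigma>) (sbs enc dec chi N \<sigma>)"
| "sbs enc dec chi (Lam x A M) \<sigma> =
     (let y = Xs enc dec chi \<sigma> (removeAll x (fv M))
      in Lam y (sbs enc dec chi A \<sigma>) (sbs enc dec chi M (\<sigma>(x := Var y))))"
| "sbs enc dec chi (Pi x A B) \<sigma> =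
     (let y = Xs enc dec chi \<sigma> (removeAll x (fv B))
      in Pi y (sbs enc dec chi A \<sigma>) (sbs enc dec chi B (\<sigma>(x := Var y))))"

definition usb :: "('v \<Rightarrow> nat) \<Rightarrow> (nat \<Rightarrow> 'v) \<Rightarrow> (nat list \<Rightarrow> nat)
    \<Rightarrow> ('c, 'v) trm \<Rightarrow> 'v \<Rightarrow> ('c, 'v) trm \<Rightarrow> ('c, 'v) trm" where
  "usb enc dec chi M x N = sbs enc dec chi M (Var(x := N))"

inductive alpha :: "('v \<Rightarrow> nat) \<Rightarrow> (nat \<Rightarrow> 'v) \<Rightarrow> (nat list \<Rightarrow> nat)
    \<Rightarrow> ('c, 'v) trm \<Rightarrow> ('c, 'v) trm \<Rightarrow> bool"
  for enc dec chi where
  a_con: "alpha enc dec chi (Con k) (Con k)"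
| a_var: "alpha enc dec chi (Var x) (Var x)"
| a_app: "alpha enc dec chi M M' \<Longrightarrow> alpha enc dec chi N N'
          \<Longrightarrow> alpha enc dec chi (App M N) (App M' N')"
| a_lam: "alpha enc dec chi A A' \<Longrightarrow> y \<notin> set (removeAll x (fv M))
          \<Longrightarrow> y \<notin> set (removeAll x' (fv M'))
          \<Longrightarrow> usb enc dec chi M x (Var y) = usb enc dec chi M' x' (Var y)
          \<Longrightarrow> alpha enc dec chi (Lam x A M) (Lam x' A' M')"
| a_pi: "alpha enc dec chi A A' \<Longrightarrow> y \<notin> set (removeAll x (fv M))
          \<Longrightarrow> y \<notin> set (removeAll x' (fv M'))
          \<Longrightarrow> usb enc dec chi M x (Var y) = usb enc dec chi M' x' (Var y)
          \<Longrightarrow> alpha enc dec chi (Pi x A M) (Pi x' A' M')"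

inductive alphas :: "('v \<Rightarrow> nat) \<Rightarrow> (nat \<Rightarrow> 'v) \<Rightarrow> (nat list \<Rightarrow> nat)
    \<Rightarrow> ('c, 'v) trm \<Rightarrow> ('c, 'v) trm \<Rightarrow> bool"
  for enc dec chi where
  as_con: "alphas enc dec chi (Con k) (Con k)"
| as_var: "alphas enc dec chi (Var x) (Var x)"
| as_app: "alphas enc dec chi M M' \<Longrightarrow> alphas enc dec chi N N'
          \<Longrightarrow> alphas enc dec chi (App M N) (App M' N')"
| as_lam: "alphas enc dec chi A A' \<Longrightarrow> y \<notin> set (removeAll x (fv M))
          \<Longrightarrow> y \<notin> set (removeAll x' (fv M'))
          \<Longrightarrow> alphas enc dec chi (usb enc dec chi M x (Var y)) (usb enc dec chi M' x' (Var y))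
          \<Longrightarrow> alphas enc dec chi (Lam x A M) (Lam x' A' M')"
| as_pi: "alphas enc dec chi A A' \<Longrightarrow> y \<notin> set (removeAll x (fv M))
          \<Longrightarrow> y \<notin> set (removeAll x' (fv M'))
          \<Longrightarrow> alphas enc dec chi (usb enc dec chi M x (Var y)) (usb enc dec chi M' x' (Var y))
          \<Longrightarrow> alphas enc dec chi (Pi x A M) (Pi x' A' M')"

end

theory Submission
  imports Defs
begin

lemma removeAll_concat_upd:
  assumes "\<And>w. w \<in> set L \<Longrightarrow> w \<noteq> x \<Longrightarrow> z \<notin> set (f w)"
  shows "removeAll z (concat (map (\<lambda>w. if w = x then [z] else f w) L))
         = concat (map f (removeAll x L))"
  using assms by (induction L) (auto simp: removeAll_id)

locale fr =
  fixes enc :: "'v \<Rightarrow> nat" and dec :: "nat \<Rightarrow> 'v" and chi :: "nat list \<Rightarrow> nat"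
  assumes ed: "\<And>n. enc (dec n) = n"
    and ch: "\<And>ns. chi ns \<notin> set ns"
begin

abbreviation S :: "('c, 'v) trm \<Rightarrow> ('v \<Rightarrow> ('c, 'v) trm) \<Rightarrow> ('c, 'v) trm" where
  "S \<equiv> sbs enc dec chi"

lemma fresh:
  assumes "w \<in> set L"
  shows "Xs enc dec chi \<sigma> L \<notin> set (fv (\<sigma> w))"
proof
  assume h: "Xs enc dec chi \<sigma> L \<in> set (fv (\<sigma> w))"
  let ?ns = "map enc (concat (map (\<lambda>y. fv (\<sigma> y)) L))"
  have "dec (chi ?ns) \<in> set (concat (map (\<lambda>y. fv (\<sigma> y)) L))"
    using h assms unfolding Xs_def Xp_def by auto
  then have "enc (dec (chi ?ns)) \<in> set ?ns" by auto
  then show False using ed ch by metis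
qed

lemma agree:
  "(\<And>w. w \<in> set (fv M) \<Longrightarrow> \<sigma> w = \<tau> w) \<Longrightarrow> S M \<sigma> = S M \<tau>"
proof (induction M arbitrary: \<sigma> \<tau>)
  case (Con k)
  show ?case by simp
next
  case (Var y)
  show ?case using Var.prems by simp
next
  case (App M N)
  have a: "S M \<sigma> = S M \<tau>" by (rule App.IH(1)) (use App.prems in simp)
  have b: "S N \<sigma> = S N \<tau>" by (rule App.IH(2)) (use App.prems in simp)
  show ?case using a b by simp
next
  case (Lam x A M)
  have e: "Xs enc dec chi \<sigma> (removeAll x (fv M)) = Xs enc dec chi \<tau> (removeAll x (fv M))"
  proof -
    have "map (\<lambda>y. fv (\<sigma> y)) (removeAll x (fv M)) = map (\<lambda>y. fv (\<tau> y)) (removeAll x (fv M))"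
      by (rule map_cong) (use Lam.prems in simp_all)
    then show ?thesis unfolding Xs_def by (rule arg_cong[where f="\<lambda>l. Xp enc dec chi (concat l)"])
  qed
  define z where "z = Xs enc dec chi \<sigma> (removeAll x (fv M))"
  have a: "S A \<sigma> = S A \<tau>" by (rule Lam.IH(1)) (use Lam.prems in simp)
  have b: "S M (\<sigma>(x:=Var z)) = S M (\<tau>(x:=Var z))" by (rule Lam.IH(2)) (use Lam.prems in simp)
  show ?case using a b e by (simp add: Let_def z_def)
next
  case (Pi x A M)
  have e: "Xs enc dec chi \<sigma> (removeAll x (fv M)) = Xs enc dec chi \<tau> (removeAll x (fv M))"
  proof -
    have "map (\<lambda>y. fv (\<sigma> y)) (removeAll x (fv M)) = map (\<lambda>y. fv (\<tau> y)) (removeAll x (fv M))"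
      by (rule map_cong) (use Pi.prems in simp_all)
    then show ?thesis unfolding Xs_def by (rule arg_cong[where f="\<lambda>l. Xp enc dec chi (concat l)"])
  qed
  define z where "z = Xs enc dec chi \<sigma> (removeAll x (fv M))"
  have a: "S A \<sigma> = S A \<tau>" by (rule Pi.IH(1)) (use Pi.prems in simp)
  have b: "S M (\<sigma>(x:=Var z)) = S M (\<tau>(x:=Var z))" by (rule Pi.IH(2)) (use Pi.prems in simp)
  show ?case using a b e by (simp add: Let_def z_def)
qed

lemma fv_rm:
  assumes "z = Xs enc dec chi \<sigma> (removeAll x (fv M))"
    and IH: "fv (S M (\<sigma>(x := Var z))) = concat (map (\<lambda>w. fv ((\<sigma>(x := Var z)) w)) (fv M))"
  shows "removeAll z (fv (S M (\<sigma>(x := Var z)))) = concat (map (\<lambda>w. fv (\<sigma> w)) (removeAll x (fv M)))"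
proof -
  have e1: "removeAll z (concat (map (\<lambda>w. if w = x then [z] else fv (\<sigma> w)) (fv M)))
        = concat (map (\<lambda>w. fv (\<sigma> w)) (removeAll x (fv M)))"
    using removeAll_concat_upd[of "fv M" x z "\<lambda>w. fv (\<sigma> w)"] fresh[of _ "removeAll x (fv M)" \<sigma>]
    unfolding assms(1) by simp
  have "(\<lambda>w. fv ((\<sigma>(x := Var z)) w)) = (\<lambda>w. if w = x then [z] else fv (\<sigma> w))" by (rule ext) simp
  then show ?thesis using e1 IH by simp
qed

lemma fvS: "fv (S M \<sigma>) = concat (map (\<lambda>w. fv (\<sigma> w)) (fv M))"
proof (induction M arbitrary: \<sigma>)
  case (Lam x A M)
  define z where "z = Xs enc dec chi \<sigma> (removeAll x (fv M))"
  have "removeAll z (fv (S M (\<sigma>(x := Var z)))) = concat (map (\<lambda>w. fv (\<sigma> w)) (removeAll x (fv M)))"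
    by (rule fv_rm[OF z_def Lam.IH(2)])
  then show ?case using Lam.IH(1)[of \<sigma>] by (simp add: Let_def z_def[symmetric])
next
  case (Pi x A M)
  define z where "z = Xs enc dec chi \<sigma> (removeAll x (fv M))"
  have "removeAll z (fv (S M (\<sigma>(x := Var z)))) = concat (map (\<lambda>w. fv (\<sigma> w)) (removeAll x (fv M)))"
    by (rule fv_rm[OF z_def Pi.IH(2)])
  then show ?case using Pi.IH(1)[of \<sigma>] by (simp add: Let_def z_def[symmetric])
next
  case (App M N)
  then show ?case by simp
qed simp_all

lemma concat_map_concat: "concat (map g (concat (map h L))) = concat (map (\<lambda>w. concat (map g (h w))) L)"
  by (induction L) simp_all

lemma comp: "S (S M \<rho>) \<sigma> = S M (\<lambda>w. S (\<rho> w) \<sigma>)"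
proof (induction M arbitrary: \<rho> \<sigma>)

  case (Lam x A M)
  define z0 where "z0 = Xs enc dec chi \<rho> (removeAll x (fv M))"
  define z where "z = Xs enc dec chi (\<lambda>w. S (\<rho> w) \<sigma>) (removeAll x (fv M))"
  have r: "removeAll z0 (fv (S M (\<rho>(x := Var z0)))) = concat (map (\<lambda>w. fv (\<rho> w)) (removeAll x (fv M)))"
    by (rule fv_rm[OF z0_def fvS])
  have z1: "Xs enc dec chi \<sigma> (removeAll z0 (fv (S M (\<rho>(x := Var z0))))) = z"
    unfolding z_def Xs_def r by (simp add: fvS concat_map_concat)
  have a: "S (S A \<rho>) \<sigma> = S A (\<lambda>w. S (\<rho> w) \<sigma>)" by (rule Lam.IH(1))
  have b: "S (S M (\<rho>(x := Var z0))) (\<sigma>(z0 := Var z)) = S M ((\<lambda>w. S (\<rho> w) \<sigma>)(x := Var z))"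
  proof -
    have "S (S M (\<rho>(x := Var z0))) (\<sigma>(z0 := Var z)) = S M (\<lambda>w. S ((\<rho>(x := Var z0)) w) (\<sigma>(z0 := Var z)))"
      by (rule Lam.IH(2))
    also have "\<dots> = S M ((\<lambda>w. S (\<rho> w) \<sigma>)(x := Var z))"
    proof (rule agree)
      fix w assume w: "w \<in> set (fv M)"
      show "S ((\<rho>(x := Var z0)) w) (\<sigma>(z0 := Var z)) = ((\<lambda>w. S (\<rho> w) \<sigma>)(x := Var z)) w"
      proof (cases "w = x")
        case False
        have "z0 \<notin> set (fv (\<rho> w))" unfolding z0_def by (rule fresh) (use w False in simp)
        then have "S (\<rho> w) (\<sigma>(z0 := Var z)) = S (\<rho> w) \<sigma>" by (intro agree) auto
        then show ?thesis using False by simp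
      qed simp
    qed
    finally show ?thesis .
  qed
  show ?case using a b z1 by (simp add: Let_def z0_def[symmetric] z_def[symmetric])
next
  case (Pi x A M)
  define z0 where "z0 = Xs enc dec chi \<rho> (removeAll x (fv M))"
  define z where "z = Xs enc dec chi (\<lambda>w. S (\<rho> w) \<sigma>) (removeAll x (fv M))"
  have r: "removeAll z0 (fv (S M (\<rho>(x := Var z0)))) = concat (map (\<lambda>w. fv (\<rho> w)) (removeAll x (fv M)))"
    by (rule fv_rm[OF z0_def fvS])
  have z1: "Xs enc dec chi \<sigma> (removeAll z0 (fv (S M (\<rho>(x := Var z0))))) = z"
    unfolding z_def Xs_def r by (simp add: fvS concat_map_concat)
  have a: "S (S A \<rho>) \<sigma> = S A (\<lambda>w. S (\<rho> w) \<sigma>)" by (rule Pi.IH(1))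
  have b: "S (S M (\<rho>(x := Var z0))) (\<sigma>(z0 := Var z)) = S M ((\<lambda>w. S (\<rho> w) \<sigma>)(x := Var z))"
  proof -
    have "S (S M (\<rho>(x := Var z0))) (\<sigma>(z0 := Var z)) = S M (\<lambda>w. S ((\<rho>(x := Var z0)) w) (\<sigma>(z0 := Var z)))"
      by (rule Pi.IH(2))
    also have "\<dots> = S M ((\<lambda>w. S (\<rho> w) \<sigma>)(x := Var z))"
    proof (rule agree)
      fix w assume w: "w \<in> set (fv M)"
      show "S ((\<rho>(x := Var z0)) w) (\<sigma>(z0 := Var z)) = ((\<lambda>w. S (\<rho> w) \<sigma>)(x := Var z)) w"
      proof (cases "w = x")
        case False
        have "z0 \<notin> set (fv (\<rho> w))" unfolding z0_def by (rule fresh) (use w False in simp)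
        then have "S (\<rho> w) (\<sigma>(z0 := Var z)) = S (\<rho> w) \<sigma>" by (intro agree) auto
        then show ?thesis using False by simp
      qed simp
    qed
    finally show ?thesis .
  qed
  show ?case using a b z1 by (simp add: Let_def z0_def[symmetric] z_def[symmetric])
next
  case (App M N)
  then show ?case by simp
qed simp_all

lemma concat_var: "concat (map (\<lambda>w. fv (Var w)) L) = L"
  by (induction L) simp_all

lemma ren_list: "concat (map (\<lambda>w. fv ((Var(x := Var y)) w)) L) = map (\<lambda>w. if w = x then y else w) L"
  by (induction L) simp_all

lemma ren_rm: "y \<notin> set (removeAll x L) \<Longrightarrow> removeAll y (map (\<lambda>w. if w = x then y else w) L) = removeAll x L"
  by (induction L) auto

lemma fv_id: "fv (S M Var) = fv M"
  by (simp add: fvS concat_var)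

lemma bind_case:
  assumes y1: "y \<notin> set (removeAll x (fv M))" and y2: "y \<notin> set (removeAll x' (fv M'))"
    and IH: "\<forall>\<sigma>. S (usb enc dec chi M x (Var y)) \<sigma> = S (usb enc dec chi M' x' (Var y)) \<sigma>"
  shows "removeAll x (fv M) = removeAll x' (fv M')"
    and "S M (\<sigma>(x := Var z)) = S M' (\<sigma>(x' := Var z))"
proof -
  have "fv (S (usb enc dec chi M x (Var y)) Var) = fv (S (usb enc dec chi M' x' (Var y)) Var)"
    using IH by simp
  then have "map (\<lambda>w. if w = x then y else w) (fv M) = map (\<lambda>w. if w = x' then y else w) (fv M')"
    by (simp only: usb_def fvS ren_list concat_var)
  then show "removeAll x (fv M) = removeAll x' (fv M')"
    using ren_rm[OF y1] ren_rm[OF y2] by metis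
next
  have e: "S (usb enc dec chi M x (Var y)) (\<sigma>(y := Var z)) = S (usb enc dec chi M' x' (Var y)) (\<sigma>(y := Var z))"
    using IH by simp
  have l: "S (usb enc dec chi M x (Var y)) (\<sigma>(y := Var z)) = S M (\<sigma>(x := Var z))"
    if y1: "y \<notin> set (removeAll x (fv M))" for M x
    unfolding usb_def comp
  proof (rule agree)
    fix w assume w: "w \<in> set (fv M)"
    show "S ((Var(x := Var y)) w) (\<sigma>(y := Var z)) = (\<sigma>(x := Var z)) w"
    proof (cases "w = x")
      case False
      then have "w \<noteq> y" using w y1 by auto
      then show ?thesis using False by simp
    qed simp
  qed
  show "S M (\<sigma>(x := Var z)) = S M' (\<sigma>(x' := Var z))"
    using e l[OF y1] l[OF y2] by simp
qed

lemma key: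
  fixes M N :: "('c, 'v) trm"
  shows "alphas enc dec chi M N \<Longrightarrow> alpha enc dec chi M N \<and> (\<forall>\<sigma>. S M \<sigma> = S N \<sigma>)"
proof (induction rule: alphas.induct)
  case (as_con k)
  then show ?case by (simp add: alpha.a_con)
next
  case (as_var x)
  then show ?case by (simp add: alpha.a_var)
next
  case (as_app M M' N N')
  then show ?case by (simp add: alpha.a_app)
next
  case (as_lam A A' y x M x' M')
  have r: "removeAll x (fv M) = removeAll x' (fv M')"
    by (rule bind_case(1)[OF as_lam(2,3)]) (use as_lam.IH(2) in blast)
  have b: "\<And>\<sigma> z. S M (\<sigma>(x := Var z)) = S M' (\<sigma>(x' := Var z))"
    by (rule bind_case(2)[OF as_lam(2,3)]) (use as_lam.IH(2) in blast)
  define z where "z = Xs enc dec chi (Var :: _ \<Rightarrow> ('c, 'v) trm) (removeAll x (fv M))"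
  have z1: "z \<notin> set (removeAll x (fv M))"
  proof
    assume "z \<in> set (removeAll x (fv M))"
    then show False using fresh[of z "removeAll x (fv M)" "Var :: _ \<Rightarrow> ('c, 'v) trm"] unfolding z_def by simp
  qed
  have al: "alpha enc dec chi (Lam x A M) (Lam x' A' M')"
  proof (rule alpha.a_lam[where y=z])
    show "alpha enc dec chi A A'" using as_lam.IH(1) by blast
    show "z \<notin> set (removeAll x (fv M))" by (rule z1)
    show "z \<notin> set (removeAll x' (fv M'))" using z1 r by simp
    show "usb enc dec chi M x (Var z) = usb enc dec chi M' x' (Var z)"
      unfolding usb_def by (rule b)
  qed
  have "\<forall>\<sigma>. S (Lam x A M) \<sigma> = S (Lam x' A' M') \<sigma>"
    using as_lam.IH(1) r b by (simp add: Let_def)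
  then show ?case using al by blast
next
  case (as_pi A A' y x M x' M')
  have r: "removeAll x (fv M) = removeAll x' (fv M')"
    by (rule bind_case(1)[OF as_pi(2,3)]) (use as_pi.IH(2) in blast)
  have b: "\<And>\<sigma> z. S M (\<sigma>(x := Var z)) = S M' (\<sigma>(x' := Var z))"
    by (rule bind_case(2)[OF as_pi(2,3)]) (use as_pi.IH(2) in blast)
  define z where "z = Xs enc dec chi (Var :: _ \<Rightarrow> ('c, 'v) trm) (removeAll x (fv M))"
  have z1: "z \<notin> set (removeAll x (fv M))"
  proof
    assume "z \<in> set (removeAll x (fv M))"
    then show False using fresh[of z "removeAll x (fv M)" "Var :: _ \<Rightarrow> ('c, 'v) trm"] unfolding z_def by simp
  qed
  have al: "alpha enc dec chi (Pi x A M) (Pi x' A' M')"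
  proof (rule alpha.a_pi[where y=z])
    show "alpha enc dec chi A A'" using as_pi.IH(1) by blast
    show "z \<notin> set (removeAll x (fv M))" by (rule z1)
    show "z \<notin> set (removeAll x' (fv M'))" using z1 r by simp
    show "usb enc dec chi M x (Var z) = usb enc dec chi M' x' (Var z)"
      unfolding usb_def by (rule b)
  qed
  have "\<forall>\<sigma>. S (Pi x A M) \<sigma> = S (Pi x' A' M') \<sigma>"
    using as_pi.IH(1) r b by (simp add: Let_def)
  then show ?case using al by blast
qed

end

theorem mainTheorem8:
  fixes enc :: "'v \<Rightarrow> nat" and dec :: "nat \<Rightarrow> 'v" and chi :: "nat list \<Rightarrow> nat"
    and M N :: "('c, 'v) trm"
  assumes "\<And>n. enc (dec n) = n"
    and "\<And>ns. chi ns \<notin> set ns"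
    and "alphas enc dec chi M N"
  shows "alpha enc dec chi M N"
proof -
  interpret fr enc dec chi using assms(1,2) by unfold_locales
  show ?thesis using key[OF assms(3)] by blast
qed

end
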